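(* Let $p$ be an odd prime, $\mathfrak{g}$ a finite nilpotent Lie ring of $p$-power order, $f\in\mathfrak{g}^*$, and $\mathfrak{p}_1,\mathfrak{p}_2$ polarizations of $f$. Then there exists a chain of polarizations $\mathfrak{p}_1=\mathfrak{q}_1,\mathfrak{q}_2,\ldots,\mathfrak{q}_m=\mathfrak{p}_2$ of $f$ such that $\mathfrak{q}_i$ and $\mathfrak{q}_{i+1}$ are neighbors for every $i<m$.
   Context: A Lie ring is an abelian group with a biadditive bracket satisfying the Jacobi identity and $[x,x]=0$. $\mathfrak{g}^*=\mathrm{Hom}(\mathfrak{g},\mathbb{C}^\times)$. A polarization of $f$ is a Lie subring $\mathfrak{p}\subseteq\mathfrak{g}$ with $f([\mathfrak{p},\mathfrak{p}])=\{1\}$ that is maximal among all additive subgroups of $\mathfrak{g}$ with this property. Two polarizations $\mathfrak{p}_1,\mathfrak{p}_2$ of $f$ are neighbors if $[\mathfrak{p}_1,\mathfrak{p}_2]\subseteq\mathfrak{p}_1\cap\mathfrak{p}_2$. *)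

theory Defs
  imports Complex_Main "HOL-Computational_Algebra.Primes"
begin

definition lie_ring :: "('a::ab_group_add \<Rightarrow> 'a \<Rightarrow> 'a) \<Rightarrow> bool" where
  "lie_ring br \<longleftrightarrow>
     (\<forall>x y z. br (x + y) z = br x z + br y z) \<and>
     (\<forall>x y z. br x (y + z) = br x y + br x z) \<and>
     (\<forall>x y z. br x (br y z) + br y (br z x) + br z (br x y) = 0) \<and>
     (\<forall>x. br x x = 0)"

definition add_subgroup :: "'a::ab_group_add set \<Rightarrow> bool" where
  "add_subgroup S \<longleftrightarrow> 0 \<in> S \<and> (\<forall>x\<in>S. \<forall>y\<in>S. x + y \<in> S) \<and> (\<forall>x\<in>S. - x \<in> S)"

definition lie_bracket_set :: "('a::ab_group_add \<Rightarrow> 'a \<Rightarrow> 'a) \<Rightarrow> 'a set \<Rightarrow> 'a set \<Rightarrow> 'a set" where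
  "lie_bracket_set br A B =
     \<Inter>{S. add_subgroup S \<and> {br a b | a b. a \<in> A \<and> b \<in> B} \<subseteq> S}"

definition lie_subring :: "('a::ab_group_add \<Rightarrow> 'a \<Rightarrow> 'a) \<Rightarrow> 'a set \<Rightarrow> bool" where
  "lie_subring br S \<longleftrightarrow> add_subgroup S \<and> lie_bracket_set br S S \<subseteq> S"

fun lower_central :: "('a::ab_group_add \<Rightarrow> 'a \<Rightarrow> 'a) \<Rightarrow> nat \<Rightarrow> 'a set" where
  "lower_central br 0 = UNIV"
| "lower_central br (Suc k) = lie_bracket_set br UNIV (lower_central br k)"

definition nilpotent_lie :: "('a::ab_group_add \<Rightarrow> 'a \<Rightarrow> 'a) \<Rightarrow> bool" where
  "nilpotent_lie br \<longleftrightarrow> (\<exists>k. lower_central br k = {0})"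

definition dual_char :: "('a::ab_group_add \<Rightarrow> complex) \<Rightarrow> bool" where
  "dual_char f \<longleftrightarrow> (\<forall>x. f x \<noteq> 0) \<and> (\<forall>x y. f (x + y) = f x * f y)"

definition polarization ::
  "('a::ab_group_add \<Rightarrow> 'a \<Rightarrow> 'a) \<Rightarrow> ('a \<Rightarrow> complex) \<Rightarrow> 'a set \<Rightarrow> bool" where
  "polarization br f P \<longleftrightarrow>
     lie_subring br P \<and> f ` (lie_bracket_set br P P) = {1} \<and>
     (\<forall>Q. add_subgroup Q \<and> f ` (lie_bracket_set br Q Q) = {1} \<and> P \<subseteq> Q \<longrightarrow> Q = P)"

definition neighbors :: "('a::ab_group_add \<Rightarrow> 'a \<Rightarrow> 'a) \<Rightarrow> 'a set \<Rightarrow> 'a set \<Rightarrow> bool" where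
  "neighbors br P1 P2 \<longleftrightarrow> lie_bracket_set br P1 P2 \<subseteq> P1 \<inter> P2"

end

theory Submission
  imports Defs
begin

definition sghull :: "'a::ab_group_add set \<Rightarrow> 'a set" where
  "sghull S = \<Inter>{T. add_subgroup T \<and> S \<subseteq> T}"

lemma sgh_sub: "add_subgroup (sghull S)"
  unfolding sghull_def add_subgroup_def by auto

lemma sgh_incl: "S \<subseteq> sghull S"
  unfolding sghull_def by auto

lemma sgh_least: "add_subgroup T \<Longrightarrow> S \<subseteq> T \<Longrightarrow> sghull S \<subseteq> T"
  unfolding sghull_def by auto

lemma lbs_hull: "lie_bracket_set br A B = sghull {br a b | a b. a \<in> A \<and> b \<in> B}"
  unfolding lie_bracket_set_def sghull_def by simp

lemma sg_0: "add_subgroup S \<Longrightarrow> 0 \<in> S" unfolding add_subgroup_def by auto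
lemma sg_add: "add_subgroup S \<Longrightarrow> x \<in> S \<Longrightarrow> y \<in> S \<Longrightarrow> x + y \<in> S" unfolding add_subgroup_def by auto
lemma sg_neg: "add_subgroup S \<Longrightarrow> x \<in> S \<Longrightarrow> - x \<in> S" unfolding add_subgroup_def by auto
lemma sg_diff: "add_subgroup S \<Longrightarrow> x \<in> S \<Longrightarrow> y \<in> S \<Longrightarrow> x - y \<in> S"
  using sg_add[of S x "-y"] sg_neg[of S y] by simp
lemma sg_neg_iff: "add_subgroup S \<Longrightarrow> - x \<in> S \<longleftrightarrow> x \<in> S"
  using sg_neg[of S x] sg_neg[of S "-x"] by auto
lemma sg_int: "add_subgroup S \<Longrightarrow> add_subgroup T \<Longrightarrow> add_subgroup (S \<inter> T)"
  unfolding add_subgroup_def by auto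

fun nmul :: "nat \<Rightarrow> 'a::ab_group_add \<Rightarrow> 'a" where
  "nmul 0 y = 0"
| "nmul (Suc n) y = y + nmul n y"

lemma sg_nmul: "add_subgroup S \<Longrightarrow> y \<in> S \<Longrightarrow> nmul j y \<in> S"
  by (induction j) (auto intro: sg_0 sg_add)

lemma lagrange_C:
  fixes H :: "complex set"
  assumes fin: "finite H" and nz: "0 \<notin> H" and w: "w \<in> H"
    and sh: "(\<lambda>h. w * h) ` H = H"
  shows "w ^ card H = 1"
proof -
  have inj: "inj_on (\<lambda>h. w * h) H" using w nz by (auto simp: inj_on_def)
  have "prod (\<lambda>h. h) H = prod (\<lambda>h. h) ((\<lambda>h. w * h) ` H)" using sh by simp
  also have "\<dots> = prod (\<lambda>h. w * h) H" using prod.reindex[OF inj] by simp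
  also have "\<dots> = w ^ card H * prod (\<lambda>h. h) H" by (simp add: prod.distrib)
  finally have "prod (\<lambda>h. h) H * 1 = prod (\<lambda>h. h) H * w ^ card H" by simp
  moreover have "prod (\<lambda>h. h) H \<noteq> 0" using fin nz by (auto simp: prod_zero_iff)
  ultimately show ?thesis by (metis mult_left_cancel)
qed

lemma roots_are_powers:
  assumes m: "m > 0" and w: "w ^ m = (1::complex)"
  shows "\<exists>k. w = cis (2 * pi / real m) ^ k"
proof -
  have "w \<in> {z. z ^ m = 1}" using w by simp
  then obtain k where "w = cis (2 * pi * real k / real m)"
    using bij_betw_roots_unity[OF m] unfolding bij_betw_def by auto
  also have "\<dots> = cis (2 * pi / real m) ^ k" by (simp add: DeMoivre mult_ac)
  finally show ?thesis by blast
qed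

lemma cyc:
  fixes \<chi> \<psi> :: "'a::ab_group_add \<Rightarrow> complex"
  assumes P: "add_subgroup P" "finite P"
    and hc: "\<And>a b. \<chi> (a+b) = \<chi> a * \<chi> b" "\<And>a. \<chi> a \<noteq> 0"
    and hp: "\<And>a b. \<psi> (a+b) = \<psi> a * \<psi> b"
    and ker: "\<And>a. a \<in> P \<Longrightarrow> \<chi> a = 1 \<Longrightarrow> \<psi> a = 1"
  shows "\<exists>j. \<forall>a\<in>P. \<psi> a = \<chi> a ^ j"
proof -
  have P0: "0 \<in> P" using P(1) by (simp add: add_subgroup_def)
  have c0: "\<chi> 0 = 1" using hc(1)[of 0 0] hc(2)[of 0] by simp
  have p0: "\<psi> 0 = 1" using ker[OF P0 c0] .
  have cneg: "\<chi> (- a) = inverse (\<chi> a)" for a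
    using hc(1)[of a "-a"] hc(2)[of a] c0 by (simp add: field_simps)
  have cdiff: "\<chi> (a - b) = \<chi> a / \<chi> b" for a b
    using hc(1)[of a "-b"] cneg[of b] by (simp add: divide_inverse)
  have cnm: "\<chi> (nmul k a) = \<chi> a ^ k" for k a by (induction k) (auto simp: c0 hc(1))
  have pnm: "\<psi> (nmul k a) = \<psi> a ^ k" for k a by (induction k) (auto simp: p0 hp)
  define H where "H = \<chi> ` P"
  define m where "m = card H"
  have finH: "finite H" using P(2) by (simp add: H_def)
  have m0: "m > 0" using finH P0 by (auto simp: m_def H_def card_gt_0_iff)
  have nzH: "0 \<notin> H" using hc(2) by (auto simp: H_def)
  have pow: "w ^ m = 1" if wH: "w \<in> H" for w
  proof -
    obtain a where a: "a \<in> P" "w = \<chi> a" using wH by (auto simp: H_def)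
    have "(\<lambda>h. w * h) ` H = H"
    proof
      show "(\<lambda>h. w * h) ` H \<subseteq> H"
        using a P(1) by (auto simp: H_def add_subgroup_def hc(1)[symmetric])
      show "H \<subseteq> (\<lambda>h. w * h) ` H"
      proof
        fix h assume "h \<in> H"
        then obtain b where b: "b \<in> P" "h = \<chi> b" by (auto simp: H_def)
        have "b - a \<in> P" using a b P(1) by (simp add: sg_diff)
        moreover have "h = w * \<chi> (b - a)" using a b hc(2)[of a] by (simp add: cdiff)
        ultimately show "h \<in> (\<lambda>h. w * h) ` H" by (auto simp: H_def)
      qed
    qed
    thus ?thesis using lagrange_C[OF finH nzH wH] by (simp add: m_def)
  qed
  define \<zeta> where "\<zeta> = cis (2 * pi / real m)"
  have zm: "\<zeta> ^ m = 1" using m0 by (simp add: \<zeta>_def DeMoivre)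
  have Heq: "H = {z. z ^ m = 1}"
  proof (rule card_subset_eq)
    show "finite {z::complex. z ^ m = 1}" using m0 by (intro finite_roots_unity) auto
    show "H \<subseteq> {z. z ^ m = 1}" using pow by auto
    show "card H = card {z::complex. z ^ m = 1}"
      using card_roots_unity_eq[OF m0] by (simp add: m_def)
  qed
  have "\<zeta> \<in> H" using Heq zm by simp
  then obtain x0 where x0: "x0 \<in> P" "\<chi> x0 = \<zeta>" by (auto simp: H_def)
  have "\<chi> (nmul m x0) = 1" using x0 zm by (simp add: cnm)
  hence "\<psi> (nmul m x0) = 1" using ker sg_nmul[OF P(1) x0(1)] by blast
  hence "\<psi> x0 ^ m = 1" by (simp add: pnm)
  then obtain j where j: "\<psi> x0 = \<zeta> ^ j" using roots_are_powers[OF m0] unfolding \<zeta>_def by blast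
  show ?thesis
  proof (intro exI ballI)
    fix a assume a: "a \<in> P"
    have "\<chi> a ^ m = 1" using pow a by (auto simp: H_def)
    then obtain k where k: "\<chi> a = \<zeta> ^ k" using roots_are_powers[OF m0] unfolding \<zeta>_def by blast
    have d: "a - nmul k x0 \<in> P" using a sg_nmul[OF P(1) x0(1)] P(1) by (simp add: sg_diff)
    have zk: "\<zeta> ^ k \<noteq> 0" using hc(2) k by metis
    have "\<chi> (a - nmul k x0) = 1" using k x0 zk by (simp add: cdiff cnm)
    hence "\<psi> (a - nmul k x0) = 1" using ker d by blast
    hence "\<psi> a = \<psi> x0 ^ k" using hp[of "a - nmul k x0" "nmul k x0"] by (simp add: pnm)
    also have "\<dots> = (\<zeta> ^ k) ^ j" using j by (simp add: power_mult[symmetric] mult.commute)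
    finally show "\<psi> a = \<chi> a ^ j" using k by simp
  qed
qed
definition rpol :: "('a::ab_group_add \<Rightarrow> 'a \<Rightarrow> 'a) \<Rightarrow> ('a \<Rightarrow> complex) \<Rightarrow> 'a set \<Rightarrow> 'a set \<Rightarrow> bool" where
  "rpol br f G P \<longleftrightarrow> P \<subseteq> G \<and> add_subgroup P \<and> (\<forall>a\<in>P. \<forall>b\<in>P. br a b \<in> P) \<and>
     (\<forall>a\<in>P. \<forall>b\<in>P. f (br a b) = 1) \<and> (\<forall>x\<in>G. (\<forall>a\<in>P. f (br a x) = 1) \<longrightarrow> x \<in> P)"

definition nb :: "('a::ab_group_add \<Rightarrow> 'a \<Rightarrow> 'a) \<Rightarrow> 'a set \<Rightarrow> 'a set \<Rightarrow> bool" where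
  "nb br P Q \<longleftrightarrow> (\<forall>a\<in>P. \<forall>b\<in>Q. br a b \<in> P \<and> br a b \<in> Q)"

definition chn :: "('a::ab_group_add \<Rightarrow> 'a \<Rightarrow> 'a) \<Rightarrow> ('a \<Rightarrow> complex) \<Rightarrow> 'a set \<Rightarrow> 'a set list \<Rightarrow> 'a set \<Rightarrow> 'a set \<Rightarrow> bool" where
  "chn br f G qs P1 P2 \<longleftrightarrow> qs \<noteq> [] \<and> hd qs = P1 \<and> last qs = P2 \<and>
     (\<forall>q\<in>set qs. rpol br f G q) \<and> (\<forall>i. Suc i < length qs \<longrightarrow> nb br (qs ! i) (qs ! Suc i))"

lemma chn_single: "rpol br f G P \<Longrightarrow> chn br f G [P] P P"
  unfolding chn_def by auto

lemma chn_cons: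
  assumes "rpol br f G P" "nb br P Q" "chn br f G qs Q R"
  shows "chn br f G (P # qs) P R"
  unfolding chn_def
proof (intro conjI allI impI)
  show "\<forall>q\<in>set (P # qs). rpol br f G q" using assms unfolding chn_def by auto
  show "last (P # qs) = R" using assms unfolding chn_def by auto
  fix i assume i: "Suc i < length (P # qs)"
  show "nb br ((P # qs) ! i) ((P # qs) ! Suc i)"
  proof (cases i)
    case 0
    then show ?thesis using assms unfolding chn_def by (auto simp: hd_conv_nth)
  next
    case (Suc k)
    then show ?thesis using assms i unfolding chn_def by auto
  qed
qed auto

lemma chn_snoc:
  assumes "chn br f G qs P Q" "rpol br f G R" "nb br Q R"
  shows "chn br f G (qs @ [R]) P R"
  unfolding chn_def
proof (intro conjI allI impI)
  show "\<forall>q\<in>set (qs @ [R]). rpol br f G q" using assms unfolding chn_def by auto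
  show "hd (qs @ [R]) = P" using assms unfolding chn_def by auto
  fix i assume i: "Suc i < length (qs @ [R])"
  show "nb br ((qs @ [R]) ! i) ((qs @ [R]) ! Suc i)"
  proof (cases "Suc i < length qs")
    case True
    then show ?thesis using assms unfolding chn_def by (auto simp: nth_append)
  next
    case False
    hence "i = length qs - 1" using i by simp
    moreover have "qs \<noteq> []" "last qs = Q" using assms unfolding chn_def by auto
    ultimately show ?thesis using assms False i by (auto simp: nth_append last_conv_nth)
  qed
qed auto

lemma chn_lift:
  assumes "chn br f G0 qs P Q" "\<And>q. rpol br f G0 q \<Longrightarrow> rpol br f G q"
  shows "chn br f G qs P Q"
  using assms unfolding chn_def by auto


locale lr =
  fixes br :: "'a::ab_group_add \<Rightarrow> 'a \<Rightarrow> 'a" and f :: "'a \<Rightarrow> complex"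
  assumes lie: "lie_ring br" and dc: "dual_char f" and fin: "finite (UNIV :: 'a set)"
    and nil: "nilpotent_lie br"
begin

lemma br_add1: "br (x + y) z = br x z + br y z" using lie unfolding lie_ring_def by blast
lemma br_add2: "br x (y + z) = br x y + br x z" using lie unfolding lie_ring_def by blast
lemma br_self: "br x x = 0" using lie unfolding lie_ring_def by blast
lemma jac: "br x (br y z) + br y (br z x) + br z (br x y) = 0" using lie unfolding lie_ring_def by blast

lemma br_0_1[simp]: "br 0 z = 0" using br_add1[of 0 0 z] by simp
lemma br_0_2[simp]: "br z 0 = 0" using br_add2[of z 0 0] by simp
lemma br_neg1: "br (- x) z = - br x z"
  using br_add1[of x "-x" z] by simp (metis add.commute eq_neg_iff_add_eq_0)
lemma br_neg2: "br z (- x) = - br z x"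
  using br_add2[of z x "-x"] by simp (metis add.commute eq_neg_iff_add_eq_0)
lemma br_diff1: "br (x - y) z = br x z - br y z" using br_add1[of x "-y" z] br_neg1 by simp
lemma br_diff2: "br z (x - y) = br z x - br z y" using br_add2[of z x "-y"] br_neg2 by simp
lemma br_anti: "br y x = - br x y"
proof -
  have "br (x+y) (x+y) = 0" by (rule br_self)
  hence "br x x + br y x + (br x y + br y y) = 0" by (simp add: br_add1 br_add2)
  hence "br y x + br x y = 0" by (simp add: br_self)
  thus ?thesis by (simp add: eq_neg_iff_add_eq_0)
qed
lemma br_deriv: "br x (br y z) = br (br x y) z + br y (br x z)"
proof -
  have "br x (br y z) + br y (br z x) + br z (br x y) = 0" by (rule jac)
  moreover have "br y (br z x) = - br y (br x z)" by (simp only: br_anti[of z x] br_neg2)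
  moreover have "br z (br x y) = - br (br x y) z" by (rule br_anti)
  ultimately have "br x (br y z) + - br y (br x z) + - br (br x y) z = 0" by metis
  thus ?thesis by (simp add: algebra_simps)
qed
lemma br_nmul2: "br a (nmul j y) = nmul j (br a y)"
  by (induction j) (auto simp: br_add2)

lemma f_add: "f (x + y) = f x * f y" using dc unfolding dual_char_def by blast
lemma f_nz: "f x \<noteq> 0" using dc unfolding dual_char_def by blast
lemma f_0[simp]: "f 0 = 1"
proof -
  have "f 0 = f 0 * f 0" using f_add[of 0 0] by simp
  thus ?thesis using f_nz[of 0] by simp
qed
lemma f_neg: "f (- x) = inverse (f x)"
proof -
  have "f x * f (-x) = 1" using f_add[of x "-x"] by simp
  thus ?thesis using f_nz[of x] by (simp add: field_simps)
qed
lemma f_diff: "f (x - y) = f x / f y" using f_add[of x "-y"] f_neg[of y] by (simp add: divide_inverse)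
lemma f_nmul: "f (nmul j w) = f w ^ j" by (induction j) (auto simp: f_add)
lemma ker_sg: "add_subgroup {w. f w = 1}"
  unfolding add_subgroup_def by (auto simp: f_add f_neg)

lemma sgh_induct:
  assumes "x \<in> sghull S" "add_subgroup {w. P w}" "\<And>s. s \<in> S \<Longrightarrow> P s"
  shows "P x"
  using sgh_least[OF assms(2)] assms(1,3) by blast

lemma sg_br2: "add_subgroup R \<Longrightarrow> add_subgroup {b. br a b \<in> R}"
  unfolding add_subgroup_def by (auto simp: br_add2 br_neg2)
lemma sg_br1: "add_subgroup R \<Longrightarrow> add_subgroup {a. br a b \<in> R}"
  unfolding add_subgroup_def by (auto simp: br_add1 br_neg1)

lemma double_sgh:
  assumes R: "add_subgroup R" and g: "\<And>a b. a \<in> S \<Longrightarrow> b \<in> S \<Longrightarrow> br a b \<in> R"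
    and a: "a \<in> sghull S" and b: "b \<in> sghull S"
  shows "br a b \<in> R"
proof -
  have 1: "\<And>b. b \<in> S \<Longrightarrow> br a b \<in> R"
    using sgh_induct[OF a sg_br1[OF R]] g by blast
  show ?thesis
    using sgh_induct[OF b sg_br2[OF R], of a] 1 by blast
qed


definition setg :: "'a set \<Rightarrow> 'a set \<Rightarrow> bool" where
  "setg G I \<longleftrightarrow> add_subgroup G \<and> (\<forall>a\<in>G. \<forall>b\<in>G. br a b \<in> G) \<and> I \<subseteq> G \<and> add_subgroup I \<and>
     (\<forall>x\<in>G. \<forall>i\<in>I. br x i \<in> I) \<and> (\<forall>i\<in>I. f i = 1)"

definition zc :: "'a set \<Rightarrow> 'a set \<Rightarrow> 'a set" where
  "zc G I = {z\<in>G. \<forall>x\<in>G. br z x \<in> I}"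

lemma zc_sub: "setg G I \<Longrightarrow> add_subgroup (zc G I)"
  unfolding setg_def zc_def add_subgroup_def by (auto simp: br_add1 br_neg1)

lemma I_zc: assumes "setg G I" shows "I \<subseteq> zc G I"
proof
  fix i assume i: "i \<in> I"
  have "br i x \<in> I" if "x \<in> G" for x
  proof -
    have "br x i \<in> I" using assms i that unfolding setg_def by blast
    hence "- br x i \<in> I" using assms unfolding setg_def by (simp add: sg_neg)
    thus ?thesis by (metis br_anti)
  qed
  thus "i \<in> zc G I" using assms i unfolding setg_def zc_def by auto
qed

lemma rad:
  assumes S: "setg G I" and P: "rpol br f G P" and z: "z \<in> zc G I"
  shows "z \<in> P"
proof -
  have zG: "z \<in> G" using z unfolding zc_def by auto
  have "f (br a z) = 1" if a: "a \<in> P" for a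
  proof -
    have "a \<in> G" using P a unfolding rpol_def by auto
    hence "br z a \<in> I" using z unfolding zc_def by auto
    hence "- br z a \<in> I" using S unfolding setg_def by (simp add: sg_neg)
    hence "br a z \<in> I" by (metis br_anti)
    thus ?thesis using S unfolding setg_def by auto
  qed
  thus ?thesis using P zG unfolding rpol_def by auto
qed

lemma case1:
  assumes S: "setg G I" and z: "z \<in> zc G I" "z \<notin> I" "f z = 1"
  shows "setg G (sghull (insert z I)) \<and> card I < card (sghull (insert z I))"
proof -
  let ?J = "sghull (insert z I)"
  have zG: "z \<in> G" using z unfolding zc_def by auto
  have Js: "add_subgroup ?J" by (rule sgh_sub)
  have JG: "?J \<subseteq> G" using S zG by (intro sgh_least) (auto simp: setg_def)
  have T: "add_subgroup {w. \<forall>x\<in>G. br x w \<in> I}"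
    using S unfolding setg_def add_subgroup_def by (auto simp: br_add2 br_neg2)
  have zT: "\<forall>x\<in>G. br x z \<in> I"
  proof
    fix x assume "x \<in> G"
    hence "br z x \<in> I" using z unfolding zc_def by auto
    hence "- br z x \<in> I" using S unfolding setg_def by (simp add: sg_neg)
    thus "br x z \<in> I" by (metis br_anti)
  qed
  have "?J \<subseteq> {w. \<forall>x\<in>G. br x w \<in> I}"
    using S zT by (intro sgh_least[OF T]) (auto simp: setg_def)
  hence JI: "\<forall>x\<in>G. \<forall>i\<in>?J. br x i \<in> ?J" using sgh_incl[of "insert z I"] by blast
  have "?J \<subseteq> {w. f w = 1}"
    using S z by (intro sgh_least[OF ker_sg]) (auto simp: setg_def)
  hence fJ: "\<forall>i\<in>?J. f i = 1" by auto
  have IJ: "I \<subseteq> ?J" using sgh_incl[of "insert z I"] by auto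
  have "z \<in> ?J" using sgh_incl[of "insert z I"] by auto
  hence "I \<subset> ?J" using IJ z by auto
  moreover have "finite ?J" using fin by (rule finite_subset[rotated]) auto
  ultimately have "card I < card ?J" by (rule psubset_card_mono[rotated])
  thus ?thesis using S Js JG JI fJ IJ unfolding setg_def by auto
qed

lemma abel:
  assumes S: "setg G I" and GZ: "G \<subseteq> zc G I" and P: "rpol br f G P"
  shows "P = G"
  using rad[OF S P] GZ P unfolding rpol_def by blast

lemma nilp:
  assumes S: "setg G I" and nZ: "\<not> G \<subseteq> zc G I"
  shows "\<exists>y\<in>G. y \<notin> zc G I \<and> (\<forall>x\<in>G. br y x \<in> zc G I)"
proof (rule ccontr)
  assume H: "\<not> ?thesis"
  have step: "\<exists>y\<in>G. y \<notin> zc G I \<and> y \<in> lower_central br k" for k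
  proof (induction k)
    case 0
    then show ?case using nZ by auto
  next
    case (Suc k)
    then obtain y where y: "y \<in> G" "y \<notin> zc G I" "y \<in> lower_central br k" by blast
    then obtain x where x: "x \<in> G" "br y x \<notin> zc G I" using H by blast
    have "br x y \<in> lower_central br (Suc k)"
      using y(3) sgh_incl[of "{br a b |a b. a \<in> UNIV \<and> b \<in> lower_central br k}"]
      by (auto simp: lbs_hull)
    hence "- br x y \<in> lower_central br (Suc k)"
      by (simp add: lbs_hull sg_neg[OF sgh_sub])
    hence "br y x \<in> lower_central br (Suc k)" by (metis br_anti)
    moreover have "br y x \<in> G" using S x y unfolding setg_def by auto
    ultimately show ?case using x by blast
  qed
  obtain K where K: "lower_central br K = {0}" using nil unfolding nilpotent_lie_def by blast
  obtain y where "y \<in> G" "y \<notin> zc G I" "y \<in> lower_central br K" using step by blast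
  moreover have "0 \<in> zc G I" using sg_0[OF zc_sub[OF S]] .
  ultimately show False using K by auto
qed

lemma nb_sym:
  assumes "nb br P Q" "add_subgroup P" "add_subgroup Q"
  shows "nb br Q P"
  unfolding nb_def
proof (intro ballI)
  fix a b assume "a \<in> Q" "b \<in> P"
  hence "br b a \<in> P \<and> br b a \<in> Q" using assms(1) unfolding nb_def by auto
  hence "- br b a \<in> P \<and> - br b a \<in> Q" using assms(2,3) by (simp add: sg_neg)
  thus "br a b \<in> Q \<and> br a b \<in> P" by (metis br_anti)
qed

definition g0 :: "'a \<Rightarrow> 'a set \<Rightarrow> 'a set \<Rightarrow> 'a set" where
  "g0 y G I = {x\<in>G. br y x \<in> I}"

context
  fixes G I :: "'a set" and y :: 'a
  assumes S: "setg G I" and inj: "\<forall>z\<in>zc G I. f z = 1 \<longrightarrow> z \<in> I"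
    and yG: "y \<in> G" and hy: "\<forall>x\<in>G. br y x \<in> zc G I"
begin

lemma Gs: "add_subgroup G" using S unfolding setg_def by auto
lemma Gr: "a \<in> G \<Longrightarrow> b \<in> G \<Longrightarrow> br a b \<in> G" using S unfolding setg_def by auto
lemma Is: "add_subgroup I" using S unfolding setg_def by auto
lemma IG: "I \<subseteq> G" using S unfolding setg_def by auto
lemma GI: "x \<in> G \<Longrightarrow> i \<in> I \<Longrightarrow> br x i \<in> I" using S unfolding setg_def by auto
lemma fI: "i \<in> I \<Longrightarrow> f i = 1" using S unfolding setg_def by auto

lemma g0_sub: "g0 y G I \<subseteq> G" unfolding g0_def by auto

lemma g0_sg: "add_subgroup (g0 y G I)"
  using Gs Is unfolding g0_def add_subgroup_def by (auto simp: br_add2 br_neg2)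

lemma g0_ideal: assumes a: "a \<in> G" and b: "b \<in> g0 y G I" shows "br a b \<in> g0 y G I"
proof -
  have bG: "b \<in> G" and byb: "br y b \<in> I" using b unfolding g0_def by auto
  have "br y a \<in> zc G I" using hy a by auto
  hence 1: "br (br y a) b \<in> I" using bG unfolding zc_def by auto
  have 2: "br a (br y b) \<in> I" using GI[OF a byb] .
  have "br y (br a b) \<in> I" using br_deriv[of y a b] sg_add[OF Is 1 2] by simp
  thus ?thesis using Gr[OF a bG] unfolding g0_def by auto
qed

lemma I_g0: "I \<subseteq> g0 y G I" using IG GI[OF yG] unfolding g0_def by auto
lemma y_g0: "y \<in> g0 y G I" using yG sg_0[OF Is] br_self[of y] unfolding g0_def by auto
lemma zc_g0: "zc G I \<subseteq> g0 y G I"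
proof
  fix z assume z: "z \<in> zc G I"
  hence "br z y \<in> I" "z \<in> G" using yG unfolding zc_def by auto
  hence "- br z y \<in> I" using Is by (simp add: sg_neg)
  hence "br y z \<in> I" by (metis br_anti)
  thus "z \<in> g0 y G I" using \<open>z \<in> G\<close> unfolding g0_def by auto
qed

lemma perp_g0: "x \<in> G \<Longrightarrow> f (br y x) = 1 \<Longrightarrow> x \<in> g0 y G I"
  using inj hy unfolding g0_def by auto

lemma setg_g0: "setg (g0 y G I) I"
  unfolding setg_def
  using g0_sg g0_ideal g0_sub I_g0 Is GI fI by blast

lemma card_g0: assumes "y \<notin> zc G I" shows "card (g0 y G I) < card G"
proof -
  obtain x where "x \<in> G" "br y x \<notin> I" using assms yG unfolding zc_def by auto
  hence "x \<notin> g0 y G I" unfolding g0_def by auto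
  hence "g0 y G I \<subset> G" using g0_sub \<open>x \<in> G\<close> by auto
  moreover have "finite G" using fin by (rule finite_subset[rotated]) auto
  ultimately show ?thesis by (rule psubset_card_mono[rotated])
qed

lemma lift: assumes q: "rpol br f (g0 y G I) q" shows "rpol br f G q"
proof -
  have qg: "q \<subseteq> g0 y G I" using q unfolding rpol_def by auto
  have "\<forall>a\<in>q. f (br a y) = 1"
  proof
    fix a assume "a \<in> q"
    hence "br y a \<in> I" using qg unfolding g0_def by auto
    hence "- br y a \<in> I" using Is by (simp add: sg_neg)
    hence "br a y \<in> I" by (metis br_anti)
    thus "f (br a y) = 1" using fI by auto
  qed
  hence yq: "y \<in> q" using q y_g0 unfolding rpol_def by auto
  have "x \<in> q" if x: "x \<in> G" "\<forall>a\<in>q. f (br a x) = 1" for x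
  proof -
    have "x \<in> g0 y G I" using perp_g0 x yq by auto
    thus ?thesis using q x unfolding rpol_def by auto
  qed
  thus ?thesis using q qg g0_sub unfolding rpol_def by blast
qed

lemma tilde:
  assumes P: "rpol br f G P"
  shows "\<exists>P'. rpol br f (g0 y G I) P' \<and> nb br P P'"
proof (cases "P \<subseteq> g0 y G I")
  case True
  have "rpol br f (g0 y G I) P" using P True g0_sub unfolding rpol_def by blast
  moreover have "nb br P P" using P unfolding rpol_def nb_def by auto
  ultimately show ?thesis by blast
next
  case False
  let ?G0 = "g0 y G I"
  let ?S = "insert y (P \<inter> ?G0)"
  let ?P' = "sghull ?S"
  have PG: "P \<subseteq> G" and Ps: "add_subgroup P" and Pr: "\<And>a b. a \<in> P \<Longrightarrow> b \<in> P \<Longrightarrow> br a b \<in> P"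
    and Pi: "\<And>a b. a \<in> P \<Longrightarrow> b \<in> P \<Longrightarrow> f (br a b) = 1"
    and Pm: "\<And>x. x \<in> G \<Longrightarrow> (\<forall>a\<in>P. f (br a x) = 1) \<Longrightarrow> x \<in> P"
    using P unfolding rpol_def by auto
  have PG0s: "add_subgroup (P \<inter> ?G0)" using sg_int[OF Ps g0_sg] .
  have IP: "I \<subseteq> P" using rad[OF S P] I_zc[OF S] by blast
  have P'sub: "?P' \<subseteq> ?G0" using y_g0 by (intro sgh_least[OF g0_sg]) auto
  have P's: "add_subgroup ?P'" by (rule sgh_sub)
  have inc: "P \<inter> ?G0 \<subseteq> ?P'" "y \<in> ?P'" using sgh_incl[of ?S] by auto
  have negI: "br a y \<in> I" if "a \<in> ?G0" for a
  proof -
    have "br y a \<in> I" using that unfolding g0_def by auto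
    hence "- br y a \<in> I" using Is by (simp add: sg_neg)
    thus ?thesis by (metis br_anti)
  qed
  have key: "br a b \<in> P \<inter> ?G0" if "a \<in> ?P'" "b \<in> ?P'" for a b
  proof (rule double_sgh[OF PG0s _ that])
    fix a b assume a: "a \<in> ?S" and b: "b \<in> ?S"
    show "br a b \<in> P \<inter> ?G0"
    proof (cases "a = y")
      case ay: True
      show ?thesis
      proof (cases "b = y")
        case True
        then show ?thesis using ay sg_0[OF PG0s] br_self by auto
      next
        case False
        hence "b \<in> ?G0" using b by auto
        hence "br y b \<in> I" unfolding g0_def by auto
        then show ?thesis using ay IP I_g0 by auto
      qed
    next
      case an: False
      hence aP: "a \<in> P \<inter> ?G0" using a by auto
      show ?thesis
      proof (cases "b = y")
        case True
        then show ?thesis using negI aP IP I_g0 by auto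
      next
        case False
        hence bP: "b \<in> P \<inter> ?G0" using b by auto
        have "br a b \<in> P" using Pr aP bP by auto
        moreover have "br a b \<in> ?G0" using g0_ideal aP bP PG by auto
        ultimately show ?thesis by auto
      qed
    qed
  qed
  have iso: "f (br a b) = 1" if "a \<in> ?P'" "b \<in> ?P'" for a b
  proof -
    have "br a b \<in> {w. f w = 1}"
    proof (rule double_sgh[OF ker_sg _ that])
      fix a b assume a: "a \<in> ?S" and b: "b \<in> ?S"
      show "br a b \<in> {w. f w = 1}"
      proof (cases "a = y")
        case ay: True
        show ?thesis
        proof (cases "b = y")
          case True
          then show ?thesis using ay br_self by auto
        next
          case False
          hence "b \<in> ?G0" using b by auto
          hence "br y b \<in> I" unfolding g0_def by auto
          then show ?thesis using ay fI by auto
        qed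
      next
        case an: False
        hence aP: "a \<in> P \<inter> ?G0" using a by auto
        show ?thesis
        proof (cases "b = y")
          case True
          then show ?thesis using negI aP fI by auto
        next
          case False
          hence bP: "b \<in> P \<inter> ?G0" using b by auto
          then show ?thesis using Pi aP bP by auto
        qed
      qed
    qed
    thus ?thesis by auto
  qed
  have maxi: "x \<in> ?P'" if x: "x \<in> ?G0" "\<forall>a\<in>?P'. f (br a x) = 1" for x
  proof -
    have xG: "x \<in> G" using x g0_sub by auto
    have finP: "finite P" using fin by (rule finite_subset[rotated]) auto
    have "\<exists>j. \<forall>a\<in>P. f (br x a) = f (br y a) ^ j"
    proof (rule cyc[OF Ps finP])
      show "f (br y (a + b)) = f (br y a) * f (br y b)" for a b by (simp add: br_add2 f_add)
      show "f (br y a) \<noteq> 0" for a by (rule f_nz)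
      show "f (br x (a + b)) = f (br x a) * f (br x b)" for a b by (simp add: br_add2 f_add)
      fix a assume a: "a \<in> P" and ch: "f (br y a) = 1"
      have "a \<in> ?G0" using perp_g0 a PG ch by auto
      hence "a \<in> ?P'" using inc a by auto
      hence "f (br a x) = 1" using x by auto
      thus "f (br x a) = 1" using br_anti[of a x] by (simp add: f_neg)
    qed
    then obtain j where j: "\<And>a. a \<in> P \<Longrightarrow> f (br x a) = f (br y a) ^ j" by blast
    define w where "w = x - nmul j y"
    have wG: "w \<in> G" unfolding w_def using sg_diff[OF Gs xG sg_nmul[OF Gs yG]] .
    have "\<forall>a\<in>P. f (br a w) = 1"
    proof
      fix a assume a: "a \<in> P"
      have e1: "f (br a x) = inverse (f (br x a))" using br_anti[of a x] by (simp add: f_neg)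
      have e2: "f (br a y) = inverse (f (br y a))" using br_anti[of a y] by (simp add: f_neg)
      have "f (br a w) = f (br a x) / f (br a y) ^ j"
        unfolding w_def by (simp add: br_diff2 br_nmul2 f_diff f_nmul)
      also have "\<dots> = 1" using e1 e2 j[OF a] f_nz[of "br y a"] by (simp add: power_inverse)
      finally show "f (br a w) = 1" .
    qed
    hence wP: "w \<in> P" using Pm wG by auto
    have "w \<in> ?G0" unfolding w_def using sg_diff[OF g0_sg x(1) sg_nmul[OF g0_sg y_g0]] .
    hence "w \<in> ?P'" using wP inc by auto
    moreover have "nmul j y \<in> ?P'" using sg_nmul[OF P's inc(2)] .
    ultimately have "w + nmul j y \<in> ?P'" using sg_add[OF P's] by auto
    thus ?thesis unfolding w_def by simp
  qed
  have rp: "rpol br f ?G0 ?P'"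
    unfolding rpol_def using P'sub P's key inc iso maxi by blast
  have "nb br P ?P'"
    unfolding nb_def
  proof (intro ballI)
    fix a b assume a: "a \<in> P" and b: "b \<in> ?P'"
    have R: "add_subgroup (P \<inter> ?P')" using sg_int[OF Ps P's] .
    have "?P' \<subseteq> {b. br a b \<in> P \<inter> ?P'}"
    proof (rule sgh_least[OF sg_br2[OF R]], rule subsetI, simp only: mem_Collect_eq)
      fix s assume s: "s \<in> ?S"
      show "br a s \<in> P \<inter> ?P'"
      proof (cases "s = y")
        case True
        have "br y a \<in> zc G I" using hy a PG by auto
        hence "- br y a \<in> zc G I" using zc_sub[OF S] by (simp add: sg_neg)
        hence "br a y \<in> zc G I" by (metis br_anti)
        hence "br a y \<in> P \<inter> ?G0" using rad[OF S P] zc_g0 by auto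
        then show ?thesis using True inc by auto
      next
        case False
        hence sP: "s \<in> P \<inter> ?G0" using s by auto
        have "br a s \<in> P" using Pr a sP by auto
        moreover have "br a s \<in> ?G0" using g0_ideal a sP PG by auto
        ultimately show ?thesis using inc by auto
      qed
    qed
    thus "br a b \<in> P \<and> br a b \<in> ?P'" using b by auto
  qed
  with rp show ?thesis by blast
qed

end

lemma gen_chain:
  "setg G I \<Longrightarrow> rpol br f G P1 \<Longrightarrow> rpol br f G P2 \<Longrightarrow> \<exists>qs. chn br f G qs P1 P2"
proof (induction "card G - card I" arbitrary: G I P1 P2 rule: less_induct)
  case less
  have S: "setg G I" by fact
  have finG: "finite G" using fin by (rule finite_subset[rotated]) auto
  show ?case
  proof (cases "\<exists>z\<in>zc G I. z \<notin> I \<and> f z = 1")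
    case True
    then obtain z where z: "z \<in> zc G I" "z \<notin> I" "f z = 1" by blast
    let ?J = "sghull (insert z I)"
    have J: "setg G ?J" "card I < card ?J" using case1[OF S z] by auto
    have "?J \<subseteq> G" using J(1) unfolding setg_def by auto
    hence "card ?J \<le> card G" using finG by (rule card_mono[rotated])
    hence "card G - card ?J < card G - card I" using J(2) by linarith
    then show ?thesis using less.hyps[OF _ J(1) less.prems(2,3)] by blast
  next
    case False
    hence inj: "\<forall>z\<in>zc G I. f z = 1 \<longrightarrow> z \<in> I" by blast
    show ?thesis
    proof (cases "G \<subseteq> zc G I")
      case True
      have "P1 = G" "P2 = G" using abel[OF S True] less.prems(2,3) by auto
      then show ?thesis using chn_single[OF less.prems(2)] by auto
    next
      case False
      then obtain y where y: "y \<in> G" "y \<notin> zc G I" "\<forall>x\<in>G. br y x \<in> zc G I"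
        using nilp[OF S] by blast
      let ?G0 = "g0 y G I"
      have S0: "setg ?G0 I" using setg_g0[OF S inj y(1) y(3)] .
      have "card ?G0 < card G" using card_g0[OF S inj y(1) y(3) y(2)] .
      moreover have "card I \<le> card ?G0"
        using I_g0[OF S inj y(1) y(3)] finite_subset[OF g0_sub[OF S inj y(1) y(3)] finG]
        by (rule card_mono[rotated])
      ultimately have lt: "card ?G0 - card I < card G - card I" by linarith
      obtain P1' where P1': "rpol br f ?G0 P1'" "nb br P1 P1'"
        using tilde[OF S inj y(1) y(3) less.prems(2)] by blast
      obtain P2' where P2': "rpol br f ?G0 P2'" "nb br P2 P2'"
        using tilde[OF S inj y(1) y(3) less.prems(3)] by blast
      obtain qs where qs: "chn br f ?G0 qs P1' P2'" using less.hyps[OF lt S0 P1'(1) P2'(1)] by blast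
      have qsG: "chn br f G qs P1' P2'" using chn_lift[OF qs lift[OF S inj y(1) y(3)]] by blast
      have "nb br P2' P2"
        using nb_sym[OF P2'(2)] less.prems(3) P2'(1) unfolding rpol_def by blast
      hence "chn br f G (qs @ [P2]) P1' P2" using chn_snoc[OF qsG less.prems(3)] by blast
      hence "chn br f G (P1 # qs @ [P2]) P1 P2" using chn_cons[OF less.prems(2) P1'(2)] by blast
      then show ?thesis by blast
    qed
  qed
qed

lemma gen_in_lbs: assumes "a \<in> A" "b \<in> B" shows "br a b \<in> lie_bracket_set br A B"
proof -
  have "br a b \<in> {br a b | a b. a \<in> A \<and> b \<in> B}" using assms by blast
  thus ?thesis unfolding lbs_hull by (meson sgh_incl subsetD)
qed

lemma lbs_le: "add_subgroup R \<Longrightarrow> (\<And>a b. a \<in> A \<Longrightarrow> b \<in> B \<Longrightarrow> br a b \<in> R) \<Longrightarrow> lie_bracket_set br A B \<subseteq> R"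
  unfolding lbs_hull by (rule sgh_least) auto

lemma lbs_f1:
  assumes "\<And>a b. a \<in> A \<Longrightarrow> b \<in> B \<Longrightarrow> f (br a b) = 1"
  shows "f ` lie_bracket_set br A B = {1}"
proof -
  have "lie_bracket_set br A B \<subseteq> {w. f w = 1}" using assms by (intro lbs_le[OF ker_sg]) auto
  moreover have "0 \<in> lie_bracket_set br A B" unfolding lbs_hull by (rule sg_0[OF sgh_sub])
  ultimately show ?thesis
  proof (intro equalityI subsetI)
    fix w assume "w \<in> f ` lie_bracket_set br A B"
    thus "w \<in> {1}" using \<open>lie_bracket_set br A B \<subseteq> {w. f w = 1}\<close> by auto
  next
    fix w assume "w \<in> {1::complex}"
    hence "w = f 0" by simp
    thus "w \<in> f ` lie_bracket_set br A B" using \<open>0 \<in> lie_bracket_set br A B\<close> by (rule image_eqI)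
  qed
qed

lemma pol_rpol: assumes "polarization br f P" shows "rpol br f UNIV P"
proof -
  have Ps: "add_subgroup P" and L: "lie_bracket_set br P P \<subseteq> P"
    and fL: "f ` lie_bracket_set br P P = {1}"
    and mx: "\<And>Q. add_subgroup Q \<Longrightarrow> f ` lie_bracket_set br Q Q = {1} \<Longrightarrow> P \<subseteq> Q \<Longrightarrow> Q = P"
    using assms unfolding polarization_def lie_subring_def by auto
  have sr: "br a b \<in> P" if "a \<in> P" "b \<in> P" for a b using gen_in_lbs[OF that] L by auto
  have iso: "f (br a b) = 1" if "a \<in> P" "b \<in> P" for a b using gen_in_lbs[OF that] fL by auto
  have "x \<in> P" if x: "\<forall>a\<in>P. f (br a x) = 1" for x
  proof -
    let ?Q = "sghull (insert x P)"
    have "f (br a b) = 1" if ab: "a \<in> ?Q" "b \<in> ?Q" for a b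
    proof -
      have "br a b \<in> {w. f w = 1}"
      proof (rule double_sgh[OF ker_sg _ ab])
        fix a b assume a: "a \<in> insert x P" and b: "b \<in> insert x P"
        show "br a b \<in> {w. f w = 1}"
        proof (cases "a = x")
          case ax: True
          show ?thesis
          proof (cases "b = x")
            case True then show ?thesis using ax br_self by simp
          next
            case False
            hence "b \<in> P" using b by auto
            hence "f (br b x) = 1" using x by auto
            then show ?thesis using ax br_anti[of b x] by (simp add: f_neg)
          qed
        next
          case False
          hence aP: "a \<in> P" using a by auto
          show ?thesis
          proof (cases "b = x")
            case True then show ?thesis using x aP by auto
          next
            case False then show ?thesis using b aP iso by auto
          qed
        qed
      qed
      thus ?thesis by simp
    qed
    hence "f ` lie_bracket_set br ?Q ?Q = {1}" by (intro lbs_f1)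
    moreover have "P \<subseteq> ?Q" using sgh_incl[of "insert x P"] by auto
    ultimately have "?Q = P" using mx[OF sgh_sub] by blast
    moreover have "x \<in> ?Q" using sgh_incl[of "insert x P"] by auto
    ultimately show ?thesis by simp
  qed
  thus ?thesis unfolding rpol_def using Ps sr iso by blast
qed

lemma rpol_pol: assumes "rpol br f UNIV P" shows "polarization br f P"
proof -
  have Ps: "add_subgroup P" and sr: "\<And>a b. a \<in> P \<Longrightarrow> b \<in> P \<Longrightarrow> br a b \<in> P"
    and iso: "\<And>a b. a \<in> P \<Longrightarrow> b \<in> P \<Longrightarrow> f (br a b) = 1"
    and mx: "\<And>x. (\<forall>a\<in>P. f (br a x) = 1) \<Longrightarrow> x \<in> P"
    using assms unfolding rpol_def by auto
  have "lie_subring br P" unfolding lie_subring_def using Ps lbs_le[OF Ps sr] by blast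
  moreover have "f ` lie_bracket_set br P P = {1}" using iso by (rule lbs_f1)
  moreover have "Q = P" if Q: "add_subgroup Q" "f ` lie_bracket_set br Q Q = {1}" "P \<subseteq> Q" for Q
  proof
    show "Q \<subseteq> P"
    proof
      fix x assume xQ: "x \<in> Q"
      have "\<forall>a\<in>P. f (br a x) = 1"
      proof
        fix a assume "a \<in> P"
        hence "br a x \<in> lie_bracket_set br Q Q" using gen_in_lbs xQ Q(3) by blast
        thus "f (br a x) = 1" using Q(2) by blast
      qed
      thus "x \<in> P" by (rule mx)
    qed
  qed (use Q in auto)
  ultimately show ?thesis unfolding polarization_def by blast
qed

lemma nb_neigh: "nb br P Q \<Longrightarrow> add_subgroup P \<Longrightarrow> add_subgroup Q \<Longrightarrow> neighbors br P Q"
  unfolding neighbors_def nb_def by (intro lbs_le sg_int) auto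

lemma setg_univ: "setg UNIV {0}"
  unfolding setg_def add_subgroup_def by auto

end

theorem lemma2p6:
  fixes br :: "'a::ab_group_add \<Rightarrow> 'a \<Rightarrow> 'a"
    and f :: "'a \<Rightarrow> complex"
    and p n :: nat
    and P1 P2 :: "'a set"
  assumes "prime p" and "odd p"
    and "lie_ring br"
    and "finite (UNIV :: 'a set)" and "card (UNIV :: 'a set) = p ^ n"
    and "nilpotent_lie br"
    and "dual_char f"
    and "polarization br f P1" and "polarization br f P2"
  shows "\<exists>qs. qs \<noteq> [] \<and> hd qs = P1 \<and> last qs = P2 \<and>
           (\<forall>q\<in>set qs. polarization br f q) \<and>
           (\<forall>i. Suc i < length qs \<longrightarrow> neighbors br (qs ! i) (qs ! Suc i))"
proof -
  interpret lr br f by unfold_locales (use assms in auto)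
  have r1: "rpol br f UNIV P1" using pol_rpol assms(8) .
  have r2: "rpol br f UNIV P2" using pol_rpol assms(9) .
  obtain qs where qs: "chn br f UNIV qs P1 P2" using gen_chain[OF setg_univ r1 r2] by blast
  have R: "\<forall>q\<in>set qs. rpol br f UNIV q" using qs unfolding chn_def by auto
  show ?thesis
  proof (intro exI conjI)
    show "qs \<noteq> []" "hd qs = P1" "last qs = P2" using qs unfolding chn_def by auto
    show "\<forall>q\<in>set qs. polarization br f q" using R rpol_pol by blast
    show "\<forall>i. Suc i < length qs \<longrightarrow> neighbors br (qs ! i) (qs ! Suc i)"
    proof (intro allI impI)
      fix i assume i: "Suc i < length qs"
      have n: "nb br (qs ! i) (qs ! Suc i)" using qs i unfolding chn_def by auto
      have "qs ! i \<in> set qs" "qs ! Suc i \<in> set qs" using i by auto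
      hence "add_subgroup (qs ! i)" "add_subgroup (qs ! Suc i)" using R unfolding rpol_def by auto
      thus "neighbors br (qs ! i) (qs ! Suc i)" using nb_neigh n by blast
    qed
  qed
qed

end
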